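(* Let $\mathcal{H}$ be an infinite-dimensional separable Hilbert space with inner product $\langle\cdot,\cdot\rangle$ (linear in the second argument), $\mathcal{D}\subseteq\mathcal{H}$ a dense subspace, $\{e_n\}_{n\ge0}$ an orthonormal basis of $\mathcal{H}$ with $e_n\in\mathcal{D}$, and $R$ a bounded operator with bounded inverse such that $\mathcal{D}$ is stable under $R,R^\dagger,R^{-1},(R^{-1})^\dagger$. Put $\varphi_n=Re_n$, $\psi_n=(R^{-1})^\dagger e_n$. Let $H$ be an operator with $D(H)\supseteq\mathcal{D}$, $D(H^\dagger)\supseteq\mathcal{D}$, $H\mathcal{D}\subseteq\mathcal{D}$, and suppose $H$ is $(\varphi,\psi)$-tridiagonal, i.e. there are complex sequences $\{b_n\},\{a_n\},\{b_n'\}$ with $\langle\psi_n,H\varphi_m\rangle=b_n\delta_{n,m+1}+a_n\delta_{n,m}+b_n'\delta_{n,m-1}$ for all $n,m\ge0$; set $b'_{-1}=0$. Let $H_0:=R^{-1}HR$. If $H_0=H_0^\dagger$, then $a_n\in\mathbb{R}$ for all $n$ and $b_m=\overline{b'_{m-1}}$ for all $m\ge0$. Conversely, if $a_m\in\mathbb{R}$ and $b_m=\overline{b'_{m-1}}$ for all $m\ge0$, then $\langle f,H_0g\rangle=\langle H_0f,g\rangle$ for all $f,g$ in the linear span $\mathcal{E}$ of $\{e_n\}$. *)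

theory Defs
  imports Complex_Main
begin

definition hnorm :: "('h \<Rightarrow> 'h \<Rightarrow> complex) \<Rightarrow> 'h \<Rightarrow> real" where
  "hnorm ip x = sqrt (Re (ip x x))"

definition complex_hilbert ::
  "(complex \<Rightarrow> 'h::ab_group_add \<Rightarrow> 'h) \<Rightarrow> ('h \<Rightarrow> 'h \<Rightarrow> complex) \<Rightarrow> bool" where
  "complex_hilbert sc ip \<longleftrightarrow>
     (\<forall>a x y. sc a (x + y) = sc a x + sc a y) \<and>
     (\<forall>a b x. sc (a + b) x = sc a x + sc b x) \<and>
     (\<forall>a b x. sc a (sc b x) = sc (a * b) x) \<and>
     (\<forall>x. sc 1 x = x) \<and>
     (\<forall>x y z. ip x (y + z) = ip x y + ip x z) \<and>
     (\<forall>c x y. ip x (sc c y) = c * ip x y) \<and>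
     (\<forall>x y. ip y x = cnj (ip x y)) \<and>
     (\<forall>x. Re (ip x x) \<ge> 0) \<and>
     (\<forall>x. ip x x = 0 \<longrightarrow> x = 0) \<and>
     (\<forall>X :: nat \<Rightarrow> 'h.
        (\<forall>\<epsilon>>0. \<exists>N. \<forall>m\<ge>N. \<forall>n\<ge>N. hnorm ip (X m - X n) < \<epsilon>) \<longrightarrow>
        (\<exists>L. \<forall>\<epsilon>>0. \<exists>N. \<forall>n\<ge>N. hnorm ip (X n - L) < \<epsilon>))"

definition hsubspace :: "(complex \<Rightarrow> 'h::ab_group_add \<Rightarrow> 'h) \<Rightarrow> 'h set \<Rightarrow> bool" where
  "hsubspace sc S \<longleftrightarrow> 0 \<in> S \<and> (\<forall>x\<in>S. \<forall>y\<in>S. x + y \<in> S) \<and> (\<forall>c. \<forall>x\<in>S. sc c x \<in> S)"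

definition hdense :: "('h::ab_group_add \<Rightarrow> 'h \<Rightarrow> complex) \<Rightarrow> 'h set \<Rightarrow> bool" where
  "hdense ip S \<longleftrightarrow> (\<forall>x. \<forall>\<epsilon>>0. \<exists>d\<in>S. hnorm ip (x - d) < \<epsilon>)"

definition orthonormal_basis :: "('h::ab_group_add \<Rightarrow> 'h \<Rightarrow> complex) \<Rightarrow> (nat \<Rightarrow> 'h) \<Rightarrow> bool" where
  "orthonormal_basis ip e \<longleftrightarrow>
     (\<forall>n m. ip (e n) (e m) = (if n = m then 1 else 0)) \<and>
     (\<forall>f. (\<forall>n. ip (e n) f = 0) \<longrightarrow> f = 0)"

definition hlinear :: "(complex \<Rightarrow> 'h::ab_group_add \<Rightarrow> 'h) \<Rightarrow> ('h \<Rightarrow> 'h) \<Rightarrow> bool" where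
  "hlinear sc T \<longleftrightarrow> (\<forall>x y. T (x + y) = T x + T y) \<and> (\<forall>c x. T (sc c x) = sc c (T x))"

definition hbounded :: "('h \<Rightarrow> 'h \<Rightarrow> complex) \<Rightarrow> ('h \<Rightarrow> 'h) \<Rightarrow> bool" where
  "hbounded ip T \<longleftrightarrow> (\<exists>C. \<forall>x. hnorm ip (T x) \<le> C * hnorm ip x)"

definition badj :: "('h \<Rightarrow> 'h \<Rightarrow> complex) \<Rightarrow> ('h \<Rightarrow> 'h) \<Rightarrow> 'h \<Rightarrow> 'h" where
  "badj ip T y = (THE z. \<forall>x. ip z x = ip y (T x))"

definition lin_op :: "(complex \<Rightarrow> 'h::ab_group_add \<Rightarrow> 'h) \<Rightarrow> 'h set \<Rightarrow> ('h \<Rightarrow> 'h) \<Rightarrow> bool" where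
  "lin_op sc Dm T \<longleftrightarrow> hsubspace sc Dm \<and>
     (\<forall>x\<in>Dm. \<forall>y\<in>Dm. T (x + y) = T x + T y) \<and> (\<forall>c. \<forall>x\<in>Dm. T (sc c x) = sc c (T x))"

definition adj_dom :: "('h \<Rightarrow> 'h \<Rightarrow> complex) \<Rightarrow> 'h set \<Rightarrow> ('h \<Rightarrow> 'h) \<Rightarrow> 'h set" where
  "adj_dom ip Dm T = {g. \<exists>h. \<forall>f\<in>Dm. ip g (T f) = ip h f}"

definition adj_op :: "('h \<Rightarrow> 'h \<Rightarrow> complex) \<Rightarrow> 'h set \<Rightarrow> ('h \<Rightarrow> 'h) \<Rightarrow> 'h \<Rightarrow> 'h" where
  "adj_op ip Dm T g = (THE h. \<forall>f\<in>Dm. ip g (T f) = ip h f)"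

definition self_adjoint_op :: "('h \<Rightarrow> 'h \<Rightarrow> complex) \<Rightarrow> 'h set \<Rightarrow> ('h \<Rightarrow> 'h) \<Rightarrow> bool" where
  "self_adjoint_op ip Dm T \<longleftrightarrow> adj_dom ip Dm T = Dm \<and> (\<forall>g\<in>Dm. adj_op ip Dm T g = T g)"

definition hspan :: "(complex \<Rightarrow> 'h::ab_group_add \<Rightarrow> 'h) \<Rightarrow> (nat \<Rightarrow> 'h) \<Rightarrow> 'h set" where
  "hspan sc e = {(\<Sum>n<N. sc (c n) (e n)) | N c. True}"

end

theory Submission
  imports Defs "HOL-Analysis.Elementary_Normed_Spaces"
begin


lemma add_sum_gen:
  fixes T :: "'a::comm_monoid_add \<Rightarrow> 'b::cancel_comm_monoid_add"
  assumes "0 \<in> S" "\<forall>x\<in>S. \<forall>y\<in>S. x + y \<in> S"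
    "\<forall>x\<in>S. \<forall>y\<in>S. T (x + y) = T x + T y" "\<forall>k\<in>A. f k \<in> S" "finite A"
  shows "T (sum f A) = (\<Sum>k\<in>A. T (f k)) \<and> sum f A \<in> S"
  using assms(5,4)
proof (induct A rule: finite_induct)
  case empty
  have "T (0 + 0) = T 0 + T 0" using assms(1,3) by blast
  then have "T 0 = 0" by simp
  then show ?case using assms(1) by simp
next
  case (insert x F)
  then show ?case using assms(2,3) by auto
qed

locale chs =
  fixes sc :: "complex \<Rightarrow> 'h::ab_group_add \<Rightarrow> 'h" and ip :: "'h \<Rightarrow> 'h \<Rightarrow> complex"
  assumes hilb: "complex_hilbert sc ip"
begin

lemma ax: "(\<forall>a x y. sc a (x + y) = sc a x + sc a y) \<and>
     (\<forall>x y z. ip x (y + z) = ip x y + ip x z) \<and>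
     (\<forall>c x y. ip x (sc c y) = c * ip x y) \<and>
     (\<forall>x y. ip y x = cnj (ip x y)) \<and>
     (\<forall>x. Re (ip x x) \<ge> 0) \<and>
     (\<forall>x. ip x x = 0 \<longrightarrow> x = 0) \<and>
     (\<forall>X :: nat \<Rightarrow> 'h.
        (\<forall>\<epsilon>>0. \<exists>N. \<forall>m\<ge>N. \<forall>n\<ge>N. hnorm ip (X m - X n) < \<epsilon>) \<longrightarrow>
        (\<exists>L. \<forall>\<epsilon>>0. \<exists>N. \<forall>n\<ge>N. hnorm ip (X n - L) < \<epsilon>))"
  using hilb unfolding complex_hilbert_def by (elim conjE) (intro conjI; assumption)

lemma sc_add_r: "sc a (x + y) = sc a x + sc a y" using ax by blast
lemma ip_add_r: "ip x (y + z) = ip x y + ip x z" using ax by blast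
lemma ip_sc_r: "ip x (sc c y) = c * ip x y" using ax by blast
lemma ip_cnj: "ip y x = cnj (ip x y)" using ax by blast
lemma ip_pos: "Re (ip x x) \<ge> 0" using ax by blast
lemma ip_def0: "ip x x = 0 \<Longrightarrow> x = 0" using ax by blast
lemma complete: "(\<forall>\<epsilon>>0. \<exists>N. \<forall>m\<ge>N. \<forall>n\<ge>N. hnorm ip ((X::nat\<Rightarrow>'h) m - X n) < \<epsilon>) \<Longrightarrow>
   \<exists>L. \<forall>\<epsilon>>0. \<exists>N. \<forall>n\<ge>N. hnorm ip (X n - L) < \<epsilon>"
  by (rule mp[OF spec[OF ax[THEN conjunct2, THEN conjunct2, THEN conjunct2, THEN conjunct2, THEN conjunct2, THEN conjunct2]]])

lemma ip_add_l: "ip (x + y) z = ip x z + ip y z"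
  by (metis ip_cnj ip_add_r complex_cnj_add)
lemma ip_sc_l: "ip (sc c x) y = cnj c * ip x y"
  by (metis ip_cnj ip_sc_r complex_cnj_mult)
lemma ip_0_r: "ip x 0 = 0"
  using ip_add_r[of x 0 0] by simp
lemma ip_0_l: "ip 0 x = 0"
  by (metis ip_cnj ip_0_r complex_cnj_zero)
lemma ip_minus_r: "ip x (- y) = - ip x y"
proof -
  have "ip x y + ip x (-y) = 0" using ip_add_r[of x y "-y"] by (simp add: ip_0_r)
  then show ?thesis by (metis minus_unique)
qed
lemma ip_minus_l: "ip (- x) y = - ip x y"
  by (metis ip_cnj ip_minus_r complex_cnj_minus)
lemma ip_diff_r: "ip x (y - z) = ip x y - ip x z"
  by (simp only: diff_conv_add_uminus ip_add_r ip_minus_r)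
lemma ip_diff_l: "ip (x - y) z = ip x z - ip y z"
  by (simp only: diff_conv_add_uminus ip_add_l ip_minus_l)
lemma ip_sum_r: "ip x (sum f A) = (\<Sum>k\<in>A. ip x (f k))"
  by (induct A rule: infinite_finite_induct) (simp_all add: ip_0_r ip_add_r)
lemma ip_sum_l: "ip (sum f A) x = (\<Sum>k\<in>A. ip (f k) x)"
  by (induct A rule: infinite_finite_induct) (simp_all add: ip_0_l ip_add_l)

lemma ip_self_real: "ip x x = complex_of_real (Re (ip x x))"
proof -
  have h: "cnj (ip x x) = ip x x" using ip_cnj[of x x] by (rule sym)
  have "ip x x \<in> \<real>" by (subst Reals_cnj_iff) (rule h)
  then show ?thesis by (simp add: complex_is_Real_iff complex_eq_iff)
qed

lemma hnorm_sq: "(hnorm ip x)^2 = Re (ip x x)"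
  by (simp add: hnorm_def ip_pos)
lemma hnorm_nonneg: "hnorm ip x \<ge> 0"
  by (simp add: hnorm_def ip_pos)
lemma hnorm_minus: "hnorm ip (- x) = hnorm ip x"
  by (simp add: hnorm_def ip_minus_l ip_minus_r)
lemma hnorm_commute: "hnorm ip (x - y) = hnorm ip (y - x)"
  by (metis hnorm_minus minus_diff_eq)

lemma CS_sq: "(cmod (ip x y))^2 \<le> Re (ip x x) * Re (ip y y)"
proof (cases "Re (ip x x) = 0")
  case True
  then have "ip x x = 0" using ip_self_real[of x] by simp
  then have "x = 0" by (rule ip_def0)
  then show ?thesis by (simp add: ip_0_l)
next
  case False
  define n where "n = Re (ip x x)"
  have n: "n > 0" using False ip_pos[of x] n_def by simp
  define p where "p = ip x y"
  define t where "t = p / complex_of_real n"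
  have xx: "ip x x = complex_of_real n" using ip_self_real n_def by simp
  have yx: "ip y x = cnj p" unfolding p_def by (rule ip_cnj)
  define v where "v = y - sc t x"
  have "ip v v = ip y y - t * ip y x - (cnj t * ip x y - t * (cnj t * ip x x))"
  proof -
    have "ip v v = ip y (y - sc t x) - ip (sc t x) (y - sc t x)" unfolding v_def by (rule ip_diff_l)
    also have "\<dots> = (ip y y - ip y (sc t x)) - (ip (sc t x) y - ip (sc t x) (sc t x))"
      by (simp only: ip_diff_r)
    also have "\<dots> = (ip y y - t * ip y x) - (cnj t * ip x y - t * (cnj t * ip x x))"
      by (simp only: ip_sc_r ip_sc_l)
    finally show ?thesis .
  qed
  also have "\<dots> = ip y y - complex_of_real ((cmod p)^2 / n)"
  proof -
    have nz: "complex_of_real n \<noteq> 0" using n by simp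
    have pc: "p * cnj p = complex_of_real ((cmod p)^2)" by (rule complex_norm_square[symmetric])
    have ct: "cnj t = cnj p / complex_of_real n" unfolding t_def
      by (simp only: complex_cnj_divide complex_cnj_complex_of_real)
    have 1: "t * cnj p = complex_of_real ((cmod p)^2 / n)"
      unfolding t_def of_real_divide pc[symmetric] by (rule times_divide_eq_left)
    have 2: "cnj t * p = complex_of_real ((cmod p)^2 / n)"
      unfolding ct of_real_divide pc[symmetric] times_divide_eq_left by (simp only: mult.commute)
    have tn: "t * complex_of_real n = p" unfolding t_def using nz by simp
    have 3: "t * (cnj t * complex_of_real n) = complex_of_real ((cmod p)^2 / n)"
      unfolding mult.left_commute[of t "cnj t"] tn by (rule 2)
    show ?thesis unfolding yx xx p_def[symmetric] 1 2 3 by simp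
  qed
  finally have "Re (ip v v) = Re (ip y y) - (cmod p)^2 / n" by simp
  then have "(cmod p)^2 / n \<le> Re (ip y y)" using ip_pos[of v] by simp
  then have "(cmod p)^2 \<le> n * Re (ip y y)" using n by (simp add: field_simps)
  then show ?thesis by (simp add: p_def n_def)
qed

lemma CS: "cmod (ip x y) \<le> hnorm ip x * hnorm ip y"
proof -
  have "cmod (ip x y) = sqrt ((cmod (ip x y))^2)" by simp
  also have "\<dots> \<le> sqrt (Re (ip x x) * Re (ip y y))" using CS_sq real_sqrt_le_mono by blast
  also have "\<dots> = hnorm ip x * hnorm ip y" by (simp add: hnorm_def real_sqrt_mult)
  finally show ?thesis .
qed

lemma complete':
  assumes "\<forall>\<epsilon>>0. \<exists>N. \<forall>m\<ge>N. \<forall>n\<ge>N. hnorm ip ((X::nat\<Rightarrow>'h) m - X n) < \<epsilon>"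
  shows "\<exists>L. (\<lambda>n. hnorm ip (X n - L)) \<longlonglongrightarrow> 0"
proof -
  obtain L where L: "\<forall>\<epsilon>>0. \<exists>N. \<forall>n\<ge>N. hnorm ip (X n - L) < \<epsilon>" using complete[OF assms] by blast
  have "(\<lambda>n. hnorm ip (X n - L)) \<longlonglongrightarrow> 0"
    by (rule LIMSEQ_I) (use L hnorm_nonneg in auto)
  then show ?thesis by blast
qed

lemma ip_cont_r:
  assumes "(\<lambda>n. hnorm ip (X n - L)) \<longlonglongrightarrow> 0"
  shows "(\<lambda>n. ip z (X n)) \<longlonglongrightarrow> ip z L"
proof (rule LIM_zero_cancel, rule Lim_null_comparison)
  show "\<forall>\<^sub>F n in sequentially. norm (ip z (X n) - ip z L) \<le> hnorm ip z * hnorm ip (X n - L)"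
    using CS by (simp add: ip_diff_r[symmetric])
  show "(\<lambda>n. hnorm ip z * hnorm ip (X n - L)) \<longlonglongrightarrow> 0"
    using tendsto_mult[OF tendsto_const[of "hnorm ip z"] assms] by simp
qed

end



lemma cnj_mult_self: "cnj z * z = complex_of_real ((cmod z)^2)"
  by (metis complex_norm_square mult.commute)

locale chs_onb = chs +
  fixes e :: "nat \<Rightarrow> 'h::ab_group_add"
  assumes onb: "orthonormal_basis ip e"
begin

lemma e_orth: "ip (e n) (e m) = (if n = m then 1 else 0)"
  using onb[unfolded orthonormal_basis_def, THEN conjunct1] by simp
lemma e_complete: "(\<And>n. ip (e n) f = 0) \<Longrightarrow> f = 0"
  using onb[unfolded orthonormal_basis_def, THEN conjunct2, rule_format] by blast

lemma ip_e_sum: "finite A \<Longrightarrow> ip (e n) (\<Sum>k\<in>A. sc (c k) (e k)) = (if n \<in> A then c n else 0)"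
proof -
  assume A: "finite A"
  have "ip (e n) (\<Sum>k\<in>A. sc (c k) (e k)) = (\<Sum>k\<in>A. c k * ip (e n) (e k))"
    by (simp only: ip_sum_r ip_sc_r)
  also have "\<dots> = (\<Sum>k\<in>A. if n = k then c k else 0)"
    by (rule sum.cong) (simp_all add: e_orth)
  also have "\<dots> = (if n \<in> A then c n else 0)" using A by simp
  finally show ?thesis .
qed

lemma ip_sum_e: "ip (\<Sum>k\<in>A. sc (c k) (e k)) w = (\<Sum>k\<in>A. cnj (c k) * ip (e k) w)"
  by (simp add: ip_sum_l ip_sc_l)

lemma ip_sum_sum: "finite A \<Longrightarrow>
   ip (\<Sum>k\<in>A. sc (c k) (e k)) (\<Sum>k\<in>A. sc (d k) (e k)) = (\<Sum>k\<in>A. cnj (c k) * d k)"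
  by (simp add: ip_sum_e ip_e_sum)

lemma norm_sum_sq: "finite A \<Longrightarrow>
   Re (ip (\<Sum>k\<in>A. sc (c k) (e k)) (\<Sum>k\<in>A. sc (c k) (e k))) = (\<Sum>k\<in>A. (cmod (c k))^2)"
  by (simp add: ip_sum_sum cnj_mult_self Re_sum)

lemma conv:
  assumes B: "\<And>N. (\<Sum>k<N. (cmod (c k))^2) \<le> B"
  shows "\<exists>L. (\<lambda>N. hnorm ip ((\<Sum>k<N. sc (c k) (e k)) - L)) \<longlonglongrightarrow> 0 \<and> (\<forall>n. ip (e n) L = c n)"
proof -
  define S where "S N = (\<Sum>k<N. (cmod (c k))^2)" for N
  define z where "z N = (\<Sum>k<N. sc (c k) (e k))" for N
  have "summable (\<lambda>k. (cmod (c k))^2)"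
    by (rule summableI_nonneg_bounded[where x=B]) (use B in auto)
  then have "convergent S" unfolding S_def by (simp add: summable_iff_convergent)
  then have CaS: "Cauchy S" by (rule convergent_Cauchy)
  have dz: "hnorm ip (z M - z N) = sqrt (S M - S N)" if "N \<le> M" for N M
  proof -
    have "z M - z N = (\<Sum>k\<in>{N..<M}. sc (c k) (e k))"
      unfolding z_def lessThan_atLeast0 using sum_diff_nat_ivl[of 0 N M] that by simp
    moreover have "S M - S N = (\<Sum>k\<in>{N..<M}. (cmod (c k))^2)"
      unfolding S_def lessThan_atLeast0 using sum_diff_nat_ivl[of 0 N M] that by simp
    ultimately show ?thesis by (simp add: hnorm_def norm_sum_sq)
  qed
  have "\<forall>\<epsilon>>0. \<exists>K. \<forall>m\<ge>K. \<forall>n\<ge>K. hnorm ip (z m - z n) < \<epsilon>"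
  proof (intro allI impI)
    fix \<epsilon> :: real assume ep: "\<epsilon> > 0"
    then obtain K where K: "\<forall>m\<ge>K. \<forall>n\<ge>K. norm (S m - S n) < \<epsilon>^2"
      using CauchyD[OF CaS, of "\<epsilon>^2"] by auto
    have "hnorm ip (z m - z n) < \<epsilon>" if "m \<ge> K" "n \<ge> K" for m n
    proof (cases "n \<le> m")
      case True
      have "S m - S n < \<epsilon>^2" using K that by fastforce
      then have "sqrt (S m - S n) < sqrt (\<epsilon>^2)" using real_sqrt_less_mono by blast
      then show ?thesis using dz[OF True] ep by simp
    next
      case False
      have "S n - S m < \<epsilon>^2" using K that by fastforce
      then have "sqrt (S n - S m) < sqrt (\<epsilon>^2)" using real_sqrt_less_mono by blast
      then show ?thesis using dz[of m n] False hnorm_commute[of "z m" "z n"] ep by simp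
    qed
    then show "\<exists>K. \<forall>m\<ge>K. \<forall>n\<ge>K. hnorm ip (z m - z n) < \<epsilon>" by blast
  qed
  then obtain L where L: "(\<lambda>N. hnorm ip (z N - L)) \<longlonglongrightarrow> 0" using complete' by blast
  have "ip (e n) L = c n" for n
  proof -
    have "(\<lambda>N. ip (e n) (z N)) \<longlonglongrightarrow> ip (e n) L" by (rule ip_cont_r[OF L])
    moreover have "eventually (\<lambda>N. ip (e n) (z N) = c n) sequentially"
      unfolding eventually_sequentially z_def by (rule exI[of _ "Suc n"]) (simp add: ip_e_sum)
    ultimately have "(\<lambda>N. c n) \<longlonglongrightarrow> ip (e n) L" by (rule Lim_transform_eventually)
    then show ?thesis using LIMSEQ_unique tendsto_const by metis
  qed
  then show ?thesis using L unfolding z_def by blast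
qed

lemma fourier: "(\<lambda>N. hnorm ip ((\<Sum>k<N. sc (ip (e k) x) (e k)) - x)) \<longlonglongrightarrow> 0"
proof -
  define c where "c k = ip (e k) x" for k
  have bessel: "(\<Sum>k<N. (cmod (c k))^2) \<le> Re (ip x x)" for N
  proof -
    define xN where "xN = (\<Sum>k<N. sc (c k) (e k))"
    define s where "s = (\<Sum>k<N. (cmod (c k))^2)"
    have a: "ip xN x = complex_of_real s"
      unfolding xN_def s_def ip_sum_e c_def[symmetric] cnj_mult_self by simp
    have b: "ip x xN = complex_of_real s" unfolding ip_cnj[of x xN] a by simp
    have cc: "ip xN xN = complex_of_real s"
      unfolding xN_def s_def by (simp add: ip_sum_sum cnj_mult_self)
    have "ip (x - xN) (x - xN) = ip x x - ip xN x - (ip x xN - ip xN xN)"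
      by (simp only: ip_diff_l ip_diff_r)
    also have "\<dots> = ip x x - complex_of_real s" unfolding a b cc by simp
    finally have "Re (ip (x - xN) (x - xN)) = Re (ip x x) - s" by simp
    then show ?thesis using ip_pos[of "x - xN"] s_def by simp
  qed
  obtain L where L: "(\<lambda>N. hnorm ip ((\<Sum>k<N. sc (c k) (e k)) - L)) \<longlonglongrightarrow> 0"
    and Le: "\<forall>n. ip (e n) L = c n"
    using conv[of c, OF bessel] by blast
  have "ip (e n) (x - L) = 0" for n using Le c_def by (simp add: ip_diff_r)
  then have "x - L = 0" by (rule e_complete)
  then have "L = x" by simp
  then show ?thesis using L c_def by simp
qed

lemma adj_exists:
  assumes lin: "hlinear sc T" and bd: "hbounded ip T"
  shows "\<exists>z. \<forall>x. ip z x = ip y (T x)"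
proof -
  obtain C where C: "\<And>x. hnorm ip (T x) \<le> C * hnorm ip x" using bd unfolding hbounded_def by blast
  have Tadd: "T (a + b) = T a + T b" for a b using lin unfolding hlinear_def by blast
  have Tsc: "T (sc c a) = sc c (T a)" for c a using lin unfolding hlinear_def by blast
  have Tsum: "T (\<Sum>k\<in>A. f k) = (\<Sum>k\<in>A. T (f k))" if "finite A" for A and f :: "nat \<Rightarrow> 'h"
    using add_sum_gen[of UNIV T A f] Tadd that by auto
  have Tdiff: "T (a - b) = T a - T b" for a b using Tadd[of "a - b" b] by (simp add: eq_diff_eq)
  define \<alpha> where "\<alpha> k = cnj (ip y (T (e k)))" for k
  define S where "S N = (\<Sum>k<N. (cmod (\<alpha> k))^2)" for N
  define K where "K = hnorm ip y * C"
  have bound: "S N \<le> K^2" for N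
  proof -
    define zN where "zN = (\<Sum>k<N. sc (\<alpha> k) (e k))"
    have S0: "S N \<ge> 0" unfolding S_def by (simp add: sum_nonneg)
    have "ip y (T zN) = (\<Sum>k<N. \<alpha> k * ip y (T (e k)))"
      unfolding zN_def by (simp add: Tsum Tsc ip_sum_r ip_sc_r)
    also have "\<dots> = complex_of_real (S N)"
      unfolding S_def \<alpha>_def by (simp add: cnj_mult_self)
    finally have eq: "ip y (T zN) = complex_of_real (S N)" .
    have "S N = cmod (ip y (T zN))" using eq S0 by simp
    also have "\<dots> \<le> hnorm ip y * hnorm ip (T zN)" by (rule CS)
    also have "\<dots> \<le> hnorm ip y * (C * hnorm ip zN)" by (rule mult_left_mono[OF C hnorm_nonneg])
    also have "hnorm ip zN = sqrt (S N)" unfolding zN_def S_def hnorm_def by (simp add: norm_sum_sq)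
    finally have le: "S N \<le> K * sqrt (S N)" unfolding K_def by (simp add: mult.assoc)
    show "S N \<le> K^2"
    proof (cases "sqrt (S N) = 0")
      case True then show ?thesis by simp
    next
      case False
      then have pos: "sqrt (S N) > 0" using S0 by simp
      have "sqrt (S N) * sqrt (S N) \<le> K * sqrt (S N)" using le S0 by simp
      then have sK: "sqrt (S N) \<le> K" using pos by (rule mult_right_le_imp_le)
      have "S N = (sqrt (S N))^2" using S0 by simp
      also have "\<dots> \<le> K^2" using sK pos by (intro power_mono) auto
      finally show ?thesis .
    qed
  qed
  obtain z where zl: "(\<lambda>N. hnorm ip ((\<Sum>k<N. sc (\<alpha> k) (e k)) - z)) \<longlonglongrightarrow> 0"
    and ze: "\<forall>n. ip (e n) z = \<alpha> n"
    using conv[of \<alpha> "K^2"] bound unfolding S_def by blast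
  have zk: "ip z (e k) = ip y (T (e k))" for k using ze ip_cnj[of z "e k"] \<alpha>_def by simp
  show ?thesis
  proof (intro exI allI)
    fix x
    define xN where "xN N = (\<Sum>k<N. sc (ip (e k) x) (e k))" for N
    have fx: "(\<lambda>N. hnorm ip (xN N - x)) \<longlonglongrightarrow> 0" unfolding xN_def by (rule fourier)
    have 1: "(\<lambda>N. ip z (xN N)) \<longlonglongrightarrow> ip z x" by (rule ip_cont_r[OF fx])
    have eqN: "ip z (xN N) = ip y (T (xN N))" for N
      unfolding xN_def by (simp add: ip_sum_r ip_sc_r Tsum Tsc zk)
    have 2: "(\<lambda>N. ip y (T (xN N))) \<longlonglongrightarrow> ip y (T x)"
    proof (rule ip_cont_r)
      show "(\<lambda>N. hnorm ip (T (xN N) - T x)) \<longlonglongrightarrow> 0"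
      proof (rule Lim_null_comparison)
        show "\<forall>\<^sub>F N in sequentially. norm (hnorm ip (T (xN N) - T x)) \<le> C * hnorm ip (xN N - x)"
          using C hnorm_nonneg by (simp add: Tdiff[symmetric])
        show "(\<lambda>N. C * hnorm ip (xN N - x)) \<longlonglongrightarrow> 0"
          using tendsto_mult[OF tendsto_const[of C] fx] by simp
      qed
    qed
    show "ip z x = ip y (T x)" using LIMSEQ_unique[OF 1[unfolded eqN] 2] .
  qed
qed

lemma badj_prop:
  assumes "hlinear sc T" "hbounded ip T"
  shows "ip (badj ip T y) x = ip y (T x)"
proof -
  let ?P = "\<lambda>z. \<forall>x. ip z x = ip y (T x)"
  obtain z where z: "?P z" using adj_exists[OF assms] by blast
  have u: "w = z" if "?P w" for w
  proof -
    have "ip (w - z) (w - z) = 0" using that z by (simp add: ip_diff_l)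
    then have "w - z = 0" by (rule ip_def0)
    then show ?thesis by simp
  qed
  have "?P (THE z. ?P z)" by (rule theI[of ?P z, OF z u])
  then show ?thesis unfolding badj_def by blast
qed

end

theorem lemma3:
  fixes sc :: "complex \<Rightarrow> 'h::ab_group_add \<Rightarrow> 'h"
    and ip :: "'h \<Rightarrow> 'h \<Rightarrow> complex"
    and D :: "'h set" and e :: "nat \<Rightarrow> 'h" and R :: "'h \<Rightarrow> 'h"
    and domH :: "'h set" and H :: "'h \<Rightarrow> 'h"
    and a b b' :: "nat \<Rightarrow> complex"
  assumes hilb: "complex_hilbert sc ip"
    and D_sub: "hsubspace sc D" and D_dense: "hdense ip D"
    and onb: "orthonormal_basis ip e" and e_D: "\<forall>n. e n \<in> D"
    and R_lin: "hlinear sc R" and R_bdd: "hbounded ip R" and R_bij: "bij R"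
    and Rinv_bdd: "hbounded ip (inv R)"
    and D_R: "R ` D \<subseteq> D" and D_Radj: "badj ip R ` D \<subseteq> D"
    and D_Rinv: "inv R ` D \<subseteq> D" and D_Rinvadj: "badj ip (inv R) ` D \<subseteq> D"
    and H_op: "lin_op sc domH H"
    and domH: "D \<subseteq> domH" and domHadj: "D \<subseteq> adj_dom ip domH H"
    and H_D: "H ` D \<subseteq> D"
    and tridiag: "\<forall>n m. ip (badj ip (inv R) (e n)) (H (R (e m))) =
                     (if n = m + 1 then b n else 0) + (if n = m then a n else 0)
                   + (if n + 1 = m then b' n else 0)"
    and b0: "b 0 = 0"
  shows "(self_adjoint_op ip {f. R f \<in> domH} (\<lambda>f. inv R (H (R f))) \<longrightarrow>
            (\<forall>n. a n \<in> \<real>) \<and> (\<forall>m. b m = (if m = 0 then 0 else cnj (b' (m - 1)))))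
       \<and> (((\<forall>m. a m \<in> \<real>) \<and> (\<forall>m. b m = (if m = 0 then 0 else cnj (b' (m - 1))))) \<longrightarrow>
            (\<forall>f\<in>hspan sc e. \<forall>g\<in>hspan sc e.
               ip f (inv R (H (R g))) = ip (inv R (H (R f))) g))"
proof -
  interpret chs_onb sc ip e
    using hilb onb by (simp add: chs_onb_def chs_def chs_onb_axioms_def)
  have Radd: "R (x + y) = R x + R y" for x y using R_lin unfolding hlinear_def by blast
  have Rsc: "R (sc c x) = sc c (R x)" for c x using R_lin unfolding hlinear_def by blast
  have RR: "R (inv R x) = x" for x using R_bij bij_is_surj surj_f_inv_f by metis
  have RiR: "inv R (R x) = x" for x using R_bij bij_is_inj inv_f_f by metis
  have Riadd: "inv R (x + y) = inv R x + inv R y" for x y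
    by (metis RR RiR Radd)
  have Risc: "inv R (sc c x) = sc c (inv R x)" for c x
    by (metis RR RiR Rsc)
  have Rinv_lin: "hlinear sc (inv R)" unfolding hlinear_def using Riadd Risc by blast
  have psi: "ip (badj ip (inv R) (e n)) w = ip (e n) (inv R w)" for n w
    by (rule badj_prop[OF Rinv_lin Rinv_bdd])
  define T where "T n m = (if n = m + 1 then b n else 0) + (if n = m then a n else 0)
                   + (if n + 1 = m then b' n else 0)" for n m
  have key: "ip (e n) (inv R (H (R (e m)))) = T n m" for n m
    using tridiag psi unfolding T_def by metis
  have eD: "R (e m) \<in> domH" for m using e_D D_R domH by blast
  have domH_sub: "hsubspace sc domH" using H_op unfolding lin_op_def by blast
  have H0: "0 \<in> domH" and Hcl: "\<forall>x\<in>domH. \<forall>y\<in>domH. x + y \<in> domH"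
    and Hscl: "\<And>c x. x \<in> domH \<Longrightarrow> sc c x \<in> domH"
    using domH_sub unfolding hsubspace_def by blast+
  have Hadd: "\<forall>x\<in>domH. \<forall>y\<in>domH. H (x + y) = H x + H y"
    and Hsc: "\<And>c x. x \<in> domH \<Longrightarrow> H (sc c x) = sc c (H x)"
    using H_op unfolding lin_op_def by blast+
  have part1: "self_adjoint_op ip {f. R f \<in> domH} (\<lambda>f. inv R (H (R f))) \<longrightarrow>
            (\<forall>n. a n \<in> \<real>) \<and> (\<forall>m. b m = (if m = 0 then 0 else cnj (b' (m - 1))))"
  proof
    assume SA: "self_adjoint_op ip {f. R f \<in> domH} (\<lambda>f. inv R (H (R f)))"
    have eDom: "e k \<in> {f. R f \<in> domH}" for k using eD by simp
    have sym: "ip g (inv R (H (R f))) = ip (inv R (H (R g))) f"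
      if g: "g \<in> {f. R f \<in> domH}" and f: "f \<in> {f. R f \<in> domH}" for g f
    proof -
      let ?P = "\<lambda>h. \<forall>f\<in>{f. R f \<in> domH}. ip g (inv R (H (R f))) = ip h f"
      have "g \<in> adj_dom ip {f. R f \<in> domH} (\<lambda>f. inv R (H (R f)))"
        using SA g unfolding self_adjoint_op_def by blast
      then obtain h where h: "?P h" unfolding adj_dom_def by blast
      have uniq: "h1 = h" if h1: "?P h1" for h1
      proof -
        have "ip (e k) (h1 - h) = 0" for k
        proof -
          have "ip h1 (e k) = ip h (e k)" using h h1 eDom[of k] by metis
          then have "ip (h1 - h) (e k) = 0" by (simp add: ip_diff_l)
          then show ?thesis using ip_cnj[of "e k" "h1 - h"] by simp
        qed
        then have "h1 - h = 0" by (rule e_complete)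
        then show ?thesis by simp
      qed
      have "?P (THE h. ?P h)" by (rule theI[of ?P h, OF h uniq])
      moreover have "adj_op ip {f. R f \<in> domH} (\<lambda>f. inv R (H (R f))) g = inv R (H (R g))"
        using SA g unfolding self_adjoint_op_def by blast
      then have "(THE h. ?P h) = inv R (H (R g))" unfolding adj_op_def by simp
      ultimately show ?thesis using f by simp
    qed
    have Tsym: "T n m = cnj (T m n)" for n m
    proof -
      have "T n m = ip (e n) (inv R (H (R (e m))))" using key by simp
      also have "\<dots> = ip (inv R (H (R (e n)))) (e m)" by (rule sym[OF eDom eDom])
      also have "\<dots> = cnj (ip (e m) (inv R (H (R (e n)))))" by (rule ip_cnj)
      also have "\<dots> = cnj (T m n)" using key by simp
      finally show ?thesis .
    qed
    have "a n \<in> \<real>" for n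
    proof -
      have "T n n = a n" unfolding T_def by simp
      then show ?thesis using Tsym[of n n] Reals_cnj_iff by metis
    qed
    moreover have "b m = (if m = 0 then 0 else cnj (b' (m - 1)))" for m
    proof (cases m)
      case 0 then show ?thesis using b0 by simp
    next
      case (Suc k)
      have "T (Suc k) k = b (Suc k)" unfolding T_def by simp
      moreover have "T k (Suc k) = b' k" unfolding T_def by simp
      ultimately show ?thesis using Tsym[of "Suc k" k] Suc by simp
    qed
    ultimately show "(\<forall>n. a n \<in> \<real>) \<and> (\<forall>m. b m = (if m = 0 then 0 else cnj (b' (m - 1))))"
      by blast
  qed
  have lin: "inv R (H (R (\<Sum>m<M. sc (d m) (e m)))) = (\<Sum>m<M. sc (d m) (inv R (H (R (e m)))))"
    for M d
  proof -
    have "R (\<Sum>m<M. sc (d m) (e m)) = (\<Sum>m<M. R (sc (d m) (e m)))"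
      using add_sum_gen[of UNIV R "{..<M}" "\<lambda>m. sc (d m) (e m)"] Radd by auto
    also have "\<dots> = (\<Sum>m<M. sc (d m) (R (e m)))" by (simp add: Rsc)
    finally have 1: "R (\<Sum>m<M. sc (d m) (e m)) = (\<Sum>m<M. sc (d m) (R (e m)))" .
    have "H (\<Sum>m<M. sc (d m) (R (e m))) = (\<Sum>m<M. H (sc (d m) (R (e m))))"
      using add_sum_gen[of domH H "{..<M}" "\<lambda>m. sc (d m) (R (e m))"] H0 Hcl Hadd Hscl eD by auto
    also have "\<dots> = (\<Sum>m<M. sc (d m) (H (R (e m))))" by (simp add: Hsc eD)
    finally have 2: "H (\<Sum>m<M. sc (d m) (R (e m))) = (\<Sum>m<M. sc (d m) (H (R (e m))))" .
    have "inv R (\<Sum>m<M. sc (d m) (H (R (e m)))) = (\<Sum>m<M. inv R (sc (d m) (H (R (e m)))))"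
      using add_sum_gen[of UNIV "inv R" "{..<M}" "\<lambda>m. sc (d m) (H (R (e m)))"] Riadd by auto
    also have "\<dots> = (\<Sum>m<M. sc (d m) (inv R (H (R (e m)))))" by (simp add: Risc)
    finally show ?thesis unfolding 1 2 .
  qed
  have part2: "((\<forall>m. a m \<in> \<real>) \<and> (\<forall>m. b m = (if m = 0 then 0 else cnj (b' (m - 1))))) \<longrightarrow>
            (\<forall>f\<in>hspan sc e. \<forall>g\<in>hspan sc e.
               ip f (inv R (H (R g))) = ip (inv R (H (R f))) g)"
  proof (intro impI ballI)
    assume hyp: "(\<forall>m. a m \<in> \<real>) \<and> (\<forall>m. b m = (if m = 0 then 0 else cnj (b' (m - 1))))"
    have ar: "cnj (a m) = a m" for m using hyp Reals_cnj_iff by blast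
    have bS: "b (Suc m) = cnj (b' m)" for m using hyp by simp
    have Ts: "cnj (T m n) = T n m" for n m
      unfolding T_def by (auto simp: ar bS)
    fix f g assume f: "f \<in> hspan sc e" and g: "g \<in> hspan sc e"
    obtain N c where fe: "f = (\<Sum>n<N. sc (c n) (e n))" using f unfolding hspan_def by blast
    obtain M d where ge: "g = (\<Sum>m<M. sc (d m) (e m))" using g unfolding hspan_def by blast
    have r: "ip (inv R (H (R (e n)))) (e m) = T n m" for n m
      using ip_cnj[of "inv R (H (R (e n)))" "e m"] key[of m n] Ts by simp
    have "ip f (inv R (H (R g))) = (\<Sum>m<M. d m * ip f (inv R (H (R (e m)))))"
      unfolding ge lin by (simp add: ip_sum_r ip_sc_r)
    also have "\<dots> = (\<Sum>m<M. d m * (\<Sum>n<N. cnj (c n) * T n m))"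
      unfolding fe by (simp add: ip_sum_l ip_sc_l key)
    also have "\<dots> = (\<Sum>m<M. \<Sum>n<N. cnj (c n) * (d m * T n m))"
      by (simp add: sum_distrib_left mult.left_commute)
    also have "\<dots> = (\<Sum>n<N. \<Sum>m<M. cnj (c n) * (d m * T n m))"
      by (rule sum.swap)
    also have "\<dots> = (\<Sum>n<N. cnj (c n) * (\<Sum>m<M. d m * T n m))"
      by (simp add: sum_distrib_left)
    also have "\<dots> = (\<Sum>n<N. cnj (c n) * ip (inv R (H (R (e n)))) g)"
      unfolding ge by (simp add: ip_sum_r ip_sc_r r)
    also have "\<dots> = ip (inv R (H (R f))) g"
      unfolding fe lin by (simp add: ip_sum_l ip_sc_l)
    finally show "ip f (inv R (H (R g))) = ip (inv R (H (R f))) g" .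
  qed
  show ?thesis using part1 part2 by blast
qed

end
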